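(* Assume the ABC Conjecture over $\mathbb{Z}$. There is an absolute constant $c>0$ such that the following holds. Let $N>0$ be an integer, let $E_N$ be the elliptic curve $y^2=x^3-Nx$ over $\mathbb{Q}$, and let $P\in E_N(\mathbb{Q})$ be a non-torsion point. If $L(2P)\le 1$, then $$\log|x(P)|\le c\log N\quad\text{and}\quad \log|x(2P)|\le c\log N .$$
   Context: ABC Conjecture over $\mathbb{Z}$: for every $\epsilon>0$ there is a constant $K_\epsilon$ such that for all coprime integers $a,b,c$ with $a+b=c$ one has $\max(|a|,|b|,|c|)\le K_\epsilon\,\mathrm{rad}(abc)^{1+\epsilon}$, where $\mathrm{rad}(m)$ is the product of the distinct primes dividing $m$. The constant $c$ may depend on the constants $K_\epsilon$ of the ABC Conjecture, but not on $N$ or $P$. For a rational point $Q\ne O$ on an elliptic curve in Weierstrass form over $\mathbb{Q}$, the length $L(Q)$ is the number of distinct primes $p$ with $|x(Q)|_p>1$, where $|\cdot|_p$ is the usual $p$-adic absolute value. Equivalently, write $x(Q)=A_Q/B_Q^2$ in lowest terms; then $L(Q)$ is the number of distinct prime divisors of $B_Q$. *)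

theory Defs
  imports Complex_Main "HOL-Computational_Algebra.Primes"
begin

text \<open>Radical: product of the distinct primes dividing m (rad 0 = 1 by convention).\<close>
definition rad :: "int \<Rightarrow> int" where
  "rad m = (\<Prod>p\<in>prime_factors m. p)"

definition ABC_conjecture :: bool where
  "ABC_conjecture \<longleftrightarrow>
     (\<forall>\<epsilon>::real. \<epsilon> > 0 \<longrightarrow> (\<exists>K::real. \<forall>a b c :: int.
        coprime a b \<and> coprime b c \<and> coprime a c \<and> a + b = c \<longrightarrow>
        real_of_int (max \<bar>a\<bar> (max \<bar>b\<bar> \<bar>c\<bar>)) \<le> K * (real_of_int (rad (a * b * c))) powr (1 + \<epsilon>)))"

datatype ecpt = Inf | Pt rat rat

fun on_curve :: "int \<Rightarrow> ecpt \<Rightarrow> bool" where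
  "on_curve N Inf = True"
| "on_curve N (Pt x y) = (y^2 = x^3 - of_int N * x)"

text \<open>Chord-tangent group law on E_N (Weierstrass form with a = -N, b = 0).\<close>
fun ec_add :: "int \<Rightarrow> ecpt \<Rightarrow> ecpt \<Rightarrow> ecpt" where
  "ec_add N Inf Q = Q"
| "ec_add N (Pt x1 y1) Inf = Pt x1 y1"
| "ec_add N (Pt x1 y1) (Pt x2 y2) =
     (if x1 = x2 \<and> y1 = - y2 then Inf
      else let l = (if x1 = x2 then (3 * x1^2 - of_int N) / (2 * y1)
                    else (y2 - y1) / (x2 - x1));
               x3 = l^2 - x1 - x2
           in Pt x3 (l * (x1 - x3) - y1))"

definition ec_mult :: "int \<Rightarrow> nat \<Rightarrow> ecpt \<Rightarrow> ecpt" where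
  "ec_mult N n P = (ec_add N P ^^ n) Inf"

definition torsion :: "int \<Rightarrow> ecpt \<Rightarrow> bool" where
  "torsion N P \<longleftrightarrow> (\<exists>n::nat. n \<ge> 1 \<and> ec_mult N n P = Inf)"

fun xcoord :: "ecpt \<Rightarrow> rat" where
  "xcoord Inf = 0"
| "xcoord (Pt x y) = x"

text \<open>Length L(Q): number of distinct primes p with |x(Q)|_p > 1, i.e. the number of
  distinct primes dividing the (reduced) denominator of x(Q).\<close>
definition ec_length :: "ecpt \<Rightarrow> nat" where
  "ec_length Q = card (prime_factors (snd (quotient_of (xcoord Q))))"

end

theory Submission
  imports Defs "HOL-Computational_Algebra.Nth_Powers"
begin


lemma real_part:
  fixes M p N K :: real
  assumes M1: "M \<ge> 1" and p1: "p \<ge> 1" and p2: "p^2 \<le> M" and N1: "N \<ge> 1" and K1: "K \<ge> 1"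
  and H: "M \<le> N * K * (2*N*p) powr (3/2)"
  shows "M \<le> 64 * K^4 * N^10"
proof -
  have "(2*N*p) powr (3/2) = (2*N) powr (3/2) * p powr (3/2)" using N1 p1 by (simp add: powr_mult)
  moreover have "p powr (3/2) = (p^2) powr (3/4)"
  proof -
    have e: "p^2 = p powr 2" using p1 by simp
    have "(p^2) powr (3/4) = p powr (2*(3/4))" by (simp only: e powr_powr)
    thus ?thesis by simp
  qed
  moreover have "(p^2) powr (3/4) \<le> M powr (3/4)" using p2 p1 by (intro powr_mono2) auto
  ultimately have "(2*N*p) powr (3/2) \<le> (2*N) powr (3/2) * M powr (3/4)"
    using N1 by (simp add: mult_left_mono)
  hence H2: "M \<le> (N * K * (2*N) powr (3/2)) * M powr (3/4)"
    using H N1 K1 by (smt (verit) mult_left_mono mult.assoc mult_nonneg_nonneg)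
  have eM: "M = M powr (1/4) * M powr (3/4)" using M1 by (simp add: powr_add[symmetric])
  have pos: "M powr (3/4) > 0" using M1 by simp
  have "M powr (1/4) * M powr (3/4) \<le> (N * K * (2*N) powr (3/2)) * M powr (3/4)" using H2 eM by simp
  hence A: "M powr (1/4) \<le> N * K * (2*N) powr (3/2)" using pos by simp
  have "M = (M powr (1/4)) ^ 4" using M1 by (simp add: powr_power)
  also have "\<dots> \<le> (N * K * (2*N) powr (3/2)) ^ 4" using A by (intro power_mono) auto
  also have "\<dots> = N^4 * K^4 * ((2*N) powr (3/2))^4" by (simp add: power_mult_distrib)
  also have "((2*N) powr (3/2))^4 = (2*N)^6"
  proof -
    have "((2*N) powr (3/2))^4 = (2*N) powr (of_nat 4 * (3/2))" using N1 by (simp only: powr_power)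
    also have "\<dots> = (2*N) powr 6" by simp
    also have "\<dots> = (2*N)^6" using N1 by simp
    finally show ?thesis .
  qed
  also have "N^4 * K^4 * (2*N)^6 = 64 * K^4 * N^10" by (simp add: power_mult_distrib)
  finally show ?thesis .
qed



lemma rad_pos: "rad m \<ge> 1"
  unfolding rad_def
  by (rule prod_ge_1) (auto dest!: in_prime_factors_imp_prime intro: less_imp_le prime_gt_1_int)

lemma rad_le_subset:
  assumes "y \<noteq> 0" "prime_factors x \<subseteq> prime_factors y"
  shows "rad x \<le> rad y"
proof -
  have f: "finite (prime_factors y)" by simp
  have "rad y = rad x * (\<Prod>p\<in>prime_factors y - prime_factors x. p)"
    unfolding rad_def using prod.subset_diff[OF assms(2) f] by (simp add: mult.commute)
  moreover have "(\<Prod>p\<in>prime_factors y - prime_factors x. p) \<ge> 1"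
    by (rule prod_ge_1) (auto dest!: in_prime_factors_imp_prime intro: less_imp_le prime_gt_1_int)
  moreover have "rad x \<ge> 1" by (rule rad_pos)
  ultimately have "rad x * 1 \<le> rad x * (\<Prod>p\<in>prime_factors y - prime_factors x. p)"
    by (intro mult_left_mono) auto
  thus ?thesis using \<open>rad y = _\<close> by simp
qed

lemma rad_le_abs:
  assumes "y \<noteq> 0" shows "rad y \<le> \<bar>y\<bar>"
proof -
  have "rad y \<le> (\<Prod>p \<in> prime_factors y. p ^ multiplicity p y)"
    unfolding rad_def
  proof (rule prod_mono)
    fix p assume p: "p \<in> prime_factors y"
    hence pr: "prime p" and "p dvd y" by auto
    hence "multiplicity p y > 0"
      using prime_multiplicity_gt_zero_iff[OF prime_imp_prime_elem[OF pr] assms] by simp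
    hence "multiplicity p y \<ge> 1" by simp
    moreover have "p \<ge> 1" using prime_gt_1_int[OF pr] by simp
    ultimately have "p ^ 1 \<le> p ^ multiplicity p y" by (rule power_increasing)
    thus "0 \<le> p \<and> p \<le> p ^ multiplicity p y" using \<open>p \<ge> 1\<close> by simp
  qed
  also have "\<dots> = \<bar>y\<bar>" using prod_prime_factors[OF assms] by simp
  finally show ?thesis .
qed

lemma rad_dvd_le:
  assumes "y \<noteq> 0" "x dvd y" shows "rad x \<le> rad y"
  using rad_le_subset[OF assms(1) dvd_prime_factors[OF assms]] .

lemma rat_sq_int:
  fixes r :: rat assumes "r^2 = of_int n" shows "\<exists>m. r = of_int m"
proof -
  obtain u v where q: "quotient_of r = (u, v)" by (cases "quotient_of r")
  have v: "v > 0" using quotient_of_denom_pos[OF q] .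
  have c: "coprime u v" using quotient_of_coprime[OF q] .
  have r: "r = of_int u / of_int v" using quotient_of_div[OF q] .
  have "of_int u ^ 2 = (of_int n * of_int v ^ 2 :: rat)"
  proof -
    have "(of_int u / of_int v)^2 = (of_int n::rat)" using assms r by simp
    hence "of_int u ^2 / of_int v^2 = (of_int n::rat)" by (simp add: power_divide)
    moreover have "(of_int v ^ 2 :: rat) \<noteq> 0" using v by simp
    ultimately show ?thesis by (simp add: divide_eq_eq)
  qed
  hence "rat_of_int (u^2) = rat_of_int (n * v^2)" by simp
  hence e: "u^2 = n * v^2" by (simp only: of_int_eq_iff)
  have dv: "v^2 dvd u^2" using e by simp
  have cp: "coprime (v^2) (u^2)" using c by (simp add: coprime_commute)
  have "\<bar>v^2\<bar> = 1" using coprime_common_divisor_int[OF cp dvd_refl dv] .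
  hence "v = 1" using v by (simp add: abs_power2 power2_eq_1_iff)
  thus ?thesis using r by auto
qed


lemma abc_gen:
  assumes "ABC_conjecture"
  obtains K :: real where "K \<ge> 1" "\<And>a b c::int. a + b = c \<Longrightarrow> a \<noteq> 0 \<Longrightarrow> b \<noteq> 0 \<Longrightarrow> c \<noteq> 0 \<Longrightarrow>
     real_of_int (max \<bar>a\<bar> (max \<bar>b\<bar> \<bar>c\<bar>)) \<le> real_of_int (gcd a b) * K * real_of_int (rad (a*b*c)) powr (3/2)"
proof -
  have hh: "(1/2::real) > 0" by simp
  from assms[unfolded ABC_conjecture_def, rule_format, OF hh] obtain K0 :: real where K0: "\<forall>a b c :: int.
        coprime a b \<and> coprime b c \<and> coprime a c \<and> a + b = c \<longrightarrow>
        real_of_int (max \<bar>a\<bar> (max \<bar>b\<bar> \<bar>c\<bar>)) \<le> K0 * (real_of_int (rad (a * b * c))) powr (1 + 1/2)"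
    by blast
  define K where "K = max K0 1"
  have "K \<ge> 1" unfolding K_def by simp
  moreover
  have "real_of_int (max \<bar>a\<bar> (max \<bar>b\<bar> \<bar>c\<bar>)) \<le> real_of_int (gcd a b) * K * real_of_int (rad (a*b*c)) powr (3/2)"
    if abc: "a + b = c" "a \<noteq> 0" "b \<noteq> 0" "c \<noteq> 0" for a b c :: int
  proof -
    define g where "g = gcd a b"
    have gpos: "g > 0" using abc(2) unfolding g_def by simp
    define a' where "a' = a div g"
    define b' where "b' = b div g"
    have ea: "a = g * a'" unfolding a'_def g_def by (rule dvd_mult_div_cancel[OF gcd_dvd1, symmetric])
    have eb: "b = g * b'" unfolding b'_def g_def by (rule dvd_mult_div_cancel[OF gcd_dvd2, symmetric])
    have ec0: "c = g * a' + g * b'" using abc(1) ea eb by linarith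
    have ec: "c = g * (a' + b')" by (simp only: ec0 distrib_left)
    have cab: "coprime a' b'" unfolding a'_def b'_def g_def using abc by (intro div_gcd_coprime) auto
    have cbc: "coprime b' (a' + b')"
      using cab gcd_add_mult[of b' 1 a'] by (simp add: coprime_iff_gcd_eq_1 gcd.commute add.commute)
    have cac: "coprime a' (a' + b')"
      using cab gcd_add_mult[of a' 1 b'] by (simp add: coprime_iff_gcd_eq_1)
    have H: "real_of_int (max \<bar>a'\<bar> (max \<bar>b'\<bar> \<bar>a'+b'\<bar>)) \<le> K0 * (real_of_int (rad (a' * b' * (a'+b')))) powr (1 + 1/2)"
    proof -
      have "coprime a' b' \<and> coprime b' (a'+b') \<and> coprime a' (a'+b') \<and> a' + b' = a' + b'"
        using cab cbc cac by simp
      thus ?thesis by (rule K0[rule_format])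
    qed
    have nz: "a*b*c \<noteq> 0" using abc by simp
    have dv: "a' * b' * (a'+b') dvd a*b*c" using ea eb ec by (simp add: mult_dvd_mono)
    have rle: "rad (a' * b' * (a'+b')) \<le> rad (a*b*c)" by (rule rad_dvd_le[OF nz dv])
    have r1: "real_of_int (rad (a' * b' * (a'+b'))) \<ge> 1" using rad_pos by simp
    have "real_of_int (rad (a' * b' * (a'+b'))) powr (3/2) \<le> real_of_int (rad (a*b*c)) powr (3/2)"
      using rle r1 by (intro powr_mono2) auto
    hence "K0 * (real_of_int (rad (a' * b' * (a'+b')))) powr (1 + 1/2) \<le> K * real_of_int (rad (a*b*c)) powr (3/2)"
      unfolding K_def by (intro mult_mono) auto
    with H have H2: "real_of_int (max \<bar>a'\<bar> (max \<bar>b'\<bar> \<bar>a'+b'\<bar>)) \<le> K * real_of_int (rad (a*b*c)) powr (3/2)" by linarith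
    have e1: "\<bar>a\<bar> = g * \<bar>a'\<bar>" "\<bar>b\<bar> = g * \<bar>b'\<bar>" "\<bar>c\<bar> = g * \<bar>a'+b'\<bar>"
      using ea eb ec gpos by (simp_all add: abs_mult)
    have "max \<bar>a\<bar> (max \<bar>b\<bar> \<bar>c\<bar>) = g * max \<bar>a'\<bar> (max \<bar>b'\<bar> \<bar>a'+b'\<bar>)"
      unfolding e1 using gpos by (simp only: max_mult_distrib_left if_True less_imp_le)
    hence "real_of_int (max \<bar>a\<bar> (max \<bar>b\<bar> \<bar>c\<bar>)) = real_of_int g * real_of_int (max \<bar>a'\<bar> (max \<bar>b'\<bar> \<bar>a'+b'\<bar>))"
      by simp
    also have "\<dots> \<le> real_of_int g * (K * real_of_int (rad (a*b*c)) powr (3/2))"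
      using H2 gpos by (intro mult_left_mono) auto
    finally show ?thesis unfolding g_def by (simp add: mult.assoc)
  qed
  ultimately show ?thesis using that by blast
qed



lemma int_bound:
  fixes a d N W C :: int and K :: real and S :: "int set"
  assumes N: "N > 0" and d: "d > 0" and cop: "coprime a d"
  and W: "W = a * (a^2 - N*d^2)" and Wnz: "W \<noteq> 0" and C: "W * d = C^2"
  and fS: "finite S" and cS: "card S \<le> 1"
  and F1: "\<And>q. prime q \<Longrightarrow> q dvd d \<Longrightarrow> q \<in> S"
  and F2: "\<And>q. prime q \<Longrightarrow> q dvd W \<Longrightarrow> \<not> q dvd 2*N \<Longrightarrow> q \<in> S"
  and K: "K \<ge> 1"
  and ABC: "\<And>a b c::int. a + b = c \<Longrightarrow> a \<noteq> 0 \<Longrightarrow> b \<noteq> 0 \<Longrightarrow> c \<noteq> 0 \<Longrightarrow>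
     real_of_int (max \<bar>a\<bar> (max \<bar>b\<bar> \<bar>c\<bar>)) \<le> real_of_int (gcd a b) * K * real_of_int (rad (a*b*c)) powr (3/2)"
  shows "real_of_int (max \<bar>a^2 - N*d^2\<bar> (max \<bar>N*d^2\<bar> \<bar>a^2\<bar>)) \<le> 64 * K^4 * real_of_int N ^ 10"
proof -
  define M where "M = max \<bar>a^2 - N*d^2\<bar> (max \<bar>N*d^2\<bar> \<bar>a^2\<bar>)"
  have anz: "a \<noteq> 0" and bnz: "a^2 - N*d^2 \<noteq> 0" using Wnz W by auto
  have Ma: "a^2 \<le> M" and Mb: "N*d^2 \<le> M" and Mc: "\<bar>a^2 - N*d^2\<bar> \<le> M" unfolding M_def by auto
  have a1: "1 \<le> \<bar>a\<bar>" using anz by linarith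
  have "\<bar>a\<bar> * 1 \<le> \<bar>a\<bar> * \<bar>a\<bar>" using a1 by (intro mult_left_mono) auto
  hence aa: "\<bar>a\<bar> \<le> a^2" by (simp add: power2_eq_square abs_mult_self_eq)
  have M1: "M \<ge> 1" using Ma aa a1 by linarith
  define T where "T = {q. prime q \<and> q dvd d*W \<and> \<not> q dvd 2*N}"
  have TS: "T \<subseteq> S"
  proof
    fix q assume "q \<in> T"
    hence q: "prime q" "q dvd d*W" "\<not> q dvd 2*N" unfolding T_def by auto
    then consider "q dvd d" | "q dvd W" using prime_dvd_multD by blast
    thus "q \<in> S" using F1 F2 q by cases auto
  qed
  have fT: "finite T" using fS TS finite_subset by blast
  have cT: "card T \<le> 1" using card_mono[OF fS TS] cS by simp
  obtain p where pT: "T \<subseteq> {p}" and pcases: "p = 1 \<or> p \<in> T"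
  proof (cases "T = {}")
    case True thus ?thesis using that[of 1] by auto
  next
    case False
    then obtain p where "p \<in> T" by auto
    moreover have "T \<subseteq> {p}" using cT fT \<open>p \<in> T\<close> by (auto simp: card_le_Suc0_iff_eq)
    ultimately show ?thesis using that by auto
  qed
  have p1: "p \<ge> 1"
    using pcases unfolding T_def by (auto dest: prime_gt_1_int)
  have p2: "p^2 \<le> M"
  proof (cases "p = 1")
    case True thus ?thesis using M1 by simp
  next
    case False
    hence pT': "p \<in> T" using pcases by auto
    hence pp: "prime p" "p dvd d*W" "\<not> p dvd 2*N" unfolding T_def by auto
    show ?thesis
    proof (cases "p dvd d")
      case True
      hence "p \<le> d" using d by (simp add: zdvd_imp_le)
      hence "p^2 \<le> d^2" using p1 by (simp add: power_mono)
      also have "d^2 \<le> N*d^2" using N mult_right_mono[of 1 N "d^2"] by simp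
      finally show ?thesis using Mb by simp
    next
      case False
      have d1: "d = 1"
      proof (rule ccontr)
        assume "d \<noteq> 1"
        hence "\<not> is_unit d" using d by auto
        then obtain q where q: "q dvd d" "prime q" using prime_divisor_exists[of d] d by auto
        hence "q \<in> S" using F1 by auto
        moreover have "p \<in> S" using pT' TS by auto
        ultimately have "q = p" using cS fS by (auto simp: card_le_Suc0_iff_eq)
        thus False using q False by simp
      qed
      have pW: "p dvd W" using pp d1 by simp
      have WC: "W = C^2" using C d1 by simp
      have "p dvd C" using pW WC pp(1) prime_dvd_power_iff[of p 2 C] by simp
      hence p2W: "p^2 dvd a * (a^2 - N)" using WC W d1 by simp
      have pN: "\<not> p dvd N" using pp(3) by (metis dvd_mult)
      have pe: "prime_elem p" by (rule prime_imp_prime_elem[OF pp(1)])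
      show ?thesis
      proof (cases "p dvd a")
        case True
        have "\<not> p dvd (a^2 - N)"
        proof
          assume h1: "p dvd a^2 - N"
          have h2: "p dvd a^2" using True by (simp add: power2_eq_square)
          have "p dvd a^2 - (a^2 - N)" by (rule dvd_diff[OF h2 h1])
          thus False using pN by simp
        qed
        hence "p^2 dvd a" using prime_power_dvd_multD[OF pe, of 2 "a^2 - N" a] p2W by (simp add: mult.commute)
        hence "p^2 \<le> \<bar>a\<bar>" using anz by (metis dvd_abs_iff zdvd_imp_le zero_less_abs_iff)
        thus ?thesis using aa Ma by simp
      next
        case False
        hence "p^2 dvd a^2 - N" using prime_power_dvd_multD[OF pe, of 2 a "a^2 - N"] p2W by simp
        moreover have "a^2 - N \<noteq> 0" using bnz d1 by simp
        ultimately have "p^2 \<le> \<bar>a^2 - N\<bar>" by (metis dvd_abs_iff zdvd_imp_le zero_less_abs_iff)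
        thus ?thesis using Mc d1 by simp
      qed
    qed
  qed
  define X where "X = (a^2 - N*d^2) * (N*d^2) * a^2"
  have Xnz: "X \<noteq> 0" unfolding X_def using anz bnz N d by simp
  have pf: "prime_factors X \<subseteq> prime_factors (2*N*p)"
  proof
    fix q assume qX: "q \<in> prime_factors X"
    hence q: "prime q" "q dvd X" by auto
    have "q dvd 2*N*p"
    proof (cases "q dvd 2*N")
      case True thus ?thesis by simp
    next
      case nq: False
      have "q dvd d*W"
      proof -
        have "q dvd (a^2 - N*d^2) \<or> q dvd N * d^2 \<or> q dvd a^2"
          using q unfolding X_def by (metis prime_dvd_multD)
        moreover have "q dvd N*d^2 \<Longrightarrow> q dvd N \<or> q dvd d"
          using q(1) by (metis prime_dvd_multD prime_dvd_power_iff zero_less_numeral)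
        moreover have "q dvd a^2 \<Longrightarrow> q dvd a"
          using q(1) by (metis prime_dvd_power_iff zero_less_numeral)
        ultimately have "q dvd (a^2 - N*d^2) \<or> q dvd N \<or> q dvd d \<or> q dvd a" by blast
        moreover have "\<not> q dvd N" using nq by (metis dvd_mult)
        ultimately show ?thesis using W by auto
      qed
      hence "q \<in> T" using q nq unfolding T_def by auto
      hence "q = p" using pT by auto
      thus ?thesis by simp
    qed
    thus "q \<in> prime_factors (2*N*p)" using q N p1 by (auto intro: prime_factorsI)
  qed
  have radX: "rad X \<le> 2*N*p"
    using rad_le_subset[OF _ pf] rad_le_abs[of "2*N*p"] N p1 by simp
  define h where "h = gcd (a^2 - N*d^2) (N*d^2)"
  have hdvd: "h dvd N"
  proof -
    have h1: "h dvd N*d^2" unfolding h_def by simp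
    have "h dvd (a^2 - N*d^2) + N*d^2" unfolding h_def by (intro dvd_add) auto
    hence h2: "h dvd a^2" by simp
    have "coprime (a^2) (d^2)" using cop by simp
    hence "coprime h (d^2)" using coprime_divisors[OF h2 dvd_refl] by blast
    thus ?thesis using h1 coprime_dvd_mult_left_iff by blast
  qed
  have hle: "h \<le> N" using hdvd N by (simp add: zdvd_imp_le)
  have abc: "real_of_int M \<le> real_of_int h * K * real_of_int (rad X) powr (3/2)"
    using ABC[of "a^2 - N*d^2" "N*d^2" "a^2"] anz bnz N d unfolding M_def h_def X_def by simp
  have "real_of_int h * K * real_of_int (rad X) powr (3/2) \<le> real_of_int N * K * real_of_int (2*N*p) powr (3/2)"
  proof -
    have "real_of_int (rad X) powr (3/2) \<le> real_of_int (2*N*p) powr (3/2)"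
    proof (rule powr_mono2)
      show "real_of_int (rad X) \<le> real_of_int (2*N*p)" using radX by (simp only: of_int_le_iff)
      show "0 \<le> real_of_int (rad X)" using rad_pos[of X] by simp
    qed simp
    moreover have "real_of_int h \<le> real_of_int N" using hle by simp
    moreover have "h \<ge> 0" unfolding h_def by simp
    ultimately show ?thesis using K by (intro mult_mono) auto
  qed
  with abc have H: "real_of_int M \<le> real_of_int N * K * (2 * real_of_int N * real_of_int p) powr (3/2)" by simp
  have "real_of_int M \<le> 64 * K^4 * real_of_int N ^ 10"
    by (rule real_part[OF _ _ _ _ K H]) (use M1 p1 p2 N in \<open>simp_all\<close>)
  thus ?thesis unfolding M_def .
qed



lemma coprime_primesI:
  fixes x y :: int
  assumes H: "\<And>p. prime p \<Longrightarrow> p dvd x \<Longrightarrow> p dvd y \<Longrightarrow> False"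
  shows "coprime x y"
proof (rule ccontr)
  assume nc: "\<not> coprime x y"
  hence nu: "\<not> is_unit (gcd x y)" by (simp add: coprime_iff_gcd_eq_1)
  show False
  proof (cases "gcd x y = 0")
    case True
    hence "x = 0" "y = 0" by auto
    thus False using H[of 2] by simp
  next
    case False
    then obtain q where q: "q dvd gcd x y" "prime q" using prime_divisor_exists[OF False nu] by auto
    have "q dvd x" using q(1) gcd_dvd1 dvd_trans by blast
    moreover have "q dvd y" using q(1) gcd_dvd2 dvd_trans by blast
    ultimately show False using H q(2) by blast
  qed
qed

lemma coprime_primeD:
  fixes x y p :: int
  assumes "coprime x y" "prime p" "p dvd x" "p dvd y" shows False
proof -
  have "is_unit p" using coprime_common_divisor[OF assms(1) assms(3) assms(4)] .
  thus False using assms(2) by (simp add: not_prime_unit)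
qed

lemma coprime_sq_int:
  fixes u v C :: int assumes u: "u > 0" and v: "v > 0" and c: "coprime u v" and e: "u * v = C^2"
  shows "\<exists>t. v = t^2"
proof -
  have c': "coprime (nat u) (nat v)" using c u v coprime_int_iff[of "nat u" "nat v"] by simp
  have "int (nat u * nat v) = int ((nat \<bar>C\<bar>)^2)" using e u v by simp
  hence "nat u * nat v = (nat \<bar>C\<bar>)^2" by (simp only: of_nat_eq_iff)
  hence "is_nth_power 2 (nat u * nat v)" by (intro is_nth_powerI) 
  hence "is_nth_power 2 (nat v)" using is_nth_power_mult_coprime_natD(2)[OF c'] u v by simp
  then obtain t where "nat v = t^2" by (elim is_nth_powerE)
  hence "v = (int t)^2" using v by (metis int_nat_eq of_nat_power less_imp_le nat_0_le)
  thus ?thesis by blast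
qed

lemma sq_diff_one:
  fixes x y :: int assumes "x^2 - y^2 = 1" shows "y = 0"
proof -
  have "y^2 < x^2" using assms by simp
  hence lt: "\<bar>y\<bar> < \<bar>x\<bar>" using abs_le_square_iff[of x y] by linarith
  hence "\<bar>y\<bar> + 1 \<le> \<bar>x\<bar>" by simp
  hence "(\<bar>y\<bar> + 1)^2 \<le> \<bar>x\<bar>^2" by (intro power_mono) auto
  hence "y^2 + 2*\<bar>y\<bar> + 1 \<le> x^2" by (simp add: power2_eq_square algebra_simps abs_mult_self_eq)
  thus ?thesis using assms by simp
qed

lemma prime_dvd_two:
  fixes q :: int assumes "prime q" "q dvd 2" shows "q = 2"
proof -
  have "q \<le> 2" using assms(2) by (simp add: zdvd_imp_le)
  moreover have "q \<ge> 2" using prime_gt_1_int[OF assms(1)] by simp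
  ultimately show ?thesis by simp
qed

lemma no_prime_unit:
  fixes x :: int assumes "x \<noteq> 0" "\<And>q. prime q \<Longrightarrow> q dvd x \<Longrightarrow> False" shows "\<bar>x\<bar> = 1"
proof -
  have "is_unit x"
  proof (rule ccontr)
    assume "\<not> is_unit x"
    then obtain q where "q dvd x" "prime q" using prime_divisor_exists[OF assms(1)] by auto
    thus False using assms(2) by blast
  qed
  thus ?thesis by simp
qed

lemma int_N1:
  fixes a d W C :: int and S :: "int set"
  assumes d: "d > 0" and cop: "coprime a d"
  and W: "W = a * (a^2 - 1*d^2)" and Wnz: "W \<noteq> 0" and C: "W * d = C^2"
  and fS: "finite S" and cS: "card S \<le> 1"
  and F1: "\<And>q. prime q \<Longrightarrow> q dvd d \<Longrightarrow> q \<in> S"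
  and F2: "\<And>q. prime q \<Longrightarrow> q dvd W \<Longrightarrow> \<not> q dvd 2*1 \<Longrightarrow> q \<in> S"
  shows False
proof -
  have anz: "a \<noteq> 0" and bnz: "a^2 - d^2 \<noteq> 0" using Wnz W by auto
  have cdW: "coprime d W"
  proof (rule coprime_primesI)
    fix p :: int assume p: "prime p" "p dvd d" "p dvd W"
    show False
    proof (cases "p dvd a")
      case True thus False using coprime_primeD[OF cop p(1) True p(2)] by blast
    next
      case False
      have "p dvd a \<or> p dvd a^2 - d^2" using prime_dvd_multD[OF p(1)] p(3) W by simp
      hence "p dvd a^2 - d^2" using False by simp
      moreover have "p dvd d^2" using p(2) by (simp add: power2_eq_square)
      ultimately have "p dvd a^2" using dvd_add[of p "a^2 - d^2" "d^2"] by simp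
      hence "p dvd a" using p(1) prime_dvd_power_iff[of p 2 a] by simp
      thus False using False by simp
    qed
  qed
  have "W * d \<ge> 0" using C by simp
  hence Wpos: "W > 0" using d Wnz by (simp add: zero_le_mult_iff)
  have "d * W = C^2" using C by (simp add: mult.commute)
  then obtain t where t: "W = t^2" using coprime_sq_int[OF d Wpos cdW] by blast
  have tnz: "t \<noteq> 0" using t Wnz by auto
  have "\<bar>a\<bar> \<ge> 1" using anz by linarith
  hence "1 \<le> \<bar>a\<bar>^2" by (rule one_le_power)
  hence a1: "a^2 \<ge> 1" by simp
  show False
  proof (cases "d = 1")
    case True
    have Wd: "W = a * (a^2 - 1)" using W True by simp
    show False
    proof (cases "a > 0")
      case apos: True
      have bpos: "a^2 - 1 > 0" using Wpos Wd apos by (simp add: zero_less_mult_iff)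
      have cab: "coprime a (a^2 - 1)"
      proof (rule coprime_primesI)
        fix p :: int assume p: "prime p" "p dvd a" "p dvd a^2 - 1"
        have "p dvd a^2" using p(2) by (simp add: power2_eq_square)
        hence "p dvd a^2 - (a^2 - 1)" using p(3) dvd_diff by blast
        hence "p dvd 1" by simp
        thus False using p(1) by (simp add: not_prime_unit)
      qed
      have "a * (a^2 - 1) = t^2" using Wd t by simp
      then obtain s where s: "a^2 - 1 = s^2" using coprime_sq_int[OF apos bpos cab] by blast
      have "a^2 - s^2 = 1" using s by simp
      hence "s = 0" by (rule sq_diff_one)
      thus False using s bpos by simp
    next
      case False
      hence "a < 0" using anz by simp
      hence "a^2 - 1 < 0" using Wpos Wd by (simp add: zero_less_mult_iff)
      thus False using a1 by simp
    qed
  next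
    case False
    hence "d > 1" using d by simp
    hence "\<not> is_unit d" by simp
    then obtain p where p: "p dvd d" "prime p" using prime_divisor_exists[of d] d by auto
    have pS: "p \<in> S" using F1 p by simp
    have Wodd: "q = 2" if q: "prime q" "q dvd W" for q
    proof (rule ccontr)
      assume "q \<noteq> 2"
      hence "\<not> q dvd 2" using prime_dvd_two q(1) by blast
      hence "q \<in> S" using F2 q by simp
      hence "q = p" using pS cS fS by (auto simp: card_le_Suc0_iff_eq)
      thus False using coprime_primeD[OF cdW p(2) p(1)] q(2) by simp
    qed
    have cab: "coprime a (a^2 - d^2)"
    proof (rule coprime_primesI)
      fix q :: int assume q: "prime q" "q dvd a" "q dvd a^2 - d^2"
      have "q dvd a^2" using q(2) by (simp add: power2_eq_square)
      hence "q dvd a^2 - (a^2 - d^2)" using q(3) dvd_diff by blast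
      hence "q dvd d^2" by simp
      hence "q dvd d" using q(1) prime_dvd_power_iff[of q 2 d] by simp
      thus False using coprime_primeD[OF cop q(1) q(2)] by simp
    qed
    have "\<bar>a\<bar> = 1 \<or> \<bar>a^2 - d^2\<bar> = 1"
    proof (rule ccontr)
      assume "\<not> (\<bar>a\<bar> = 1 \<or> \<bar>a^2 - d^2\<bar> = 1)"
      hence n1: "\<bar>a\<bar> \<noteq> 1" and n2: "\<bar>a^2 - d^2\<bar> \<noteq> 1" by auto
      obtain q1 where q1: "prime q1" "q1 dvd a" using no_prime_unit[OF anz] n1 by blast
      obtain q2 where q2: "prime q2" "q2 dvd a^2 - d^2" using no_prime_unit[OF bnz] n2 by blast
      have "q1 = 2" using Wodd q1 W by simp
      moreover have "q2 = 2" using Wodd q2 W by simp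
      ultimately show False using coprime_primeD[OF cab q1(1) q1(2)] q2(2) by simp
    qed
    thus False
    proof
      assume "\<bar>a^2 - d^2\<bar> = 1"
      hence "a^2 - d^2 = 1 \<or> d^2 - a^2 = 1" by linarith
      thus False
      proof
        assume "a^2 - d^2 = 1" hence "d = 0" by (rule sq_diff_one)
        thus False using d by simp
      next
        assume "d^2 - a^2 = 1" hence "a = 0" by (rule sq_diff_one)
        thus False using anz by simp
      qed
    next
      assume a1': "\<bar>a\<bar> = 1"
      have "a^2 = \<bar>a\<bar>^2" by simp
      hence "a^2 = 1" using a1' by simp
      have dd: "d^2 > 1" using \<open>d > 1\<close> by (simp add: one_less_power)
      have "\<bar>W\<bar> = \<bar>a\<bar> * \<bar>a^2 - d^2\<bar>" using W by (simp add: abs_mult)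
      also have "\<dots> = d^2 - 1" using a1' \<open>a^2 = 1\<close> dd by (simp add: abs_if)
      finally have "W = d^2 - 1" using Wpos by simp
      hence "d^2 - t^2 = 1" using t by simp
      hence "t = 0" by (rule sq_diff_one)
      thus False using tnz by simp
    qed
  qed
qed



lemma ln_final:
  fixes Bc Nr z :: real
  assumes B: "Bc \<ge> 1" and N: "Nr \<ge> 2" and z0: "0 \<le> z" and z: "z \<le> 4*Bc^2*Nr^20"
  shows "ln z \<le> (20 + ln(4*Bc^2)/ln 2) * ln Nr"
proof -
  have l2: "ln (2::real) > 0" by simp
  have lN: "ln Nr \<ge> ln 2" using N by simp
  have "1 \<le> Bc^2" by (rule one_le_power[OF B])
  hence "1 \<le> 4*Bc^2" by linarith
  hence lB: "ln (4*Bc^2) \<ge> 0" by simp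
  have q: "ln(4*Bc^2) \<le> ln(4*Bc^2)/ln 2 * ln Nr"
  proof -
    have "ln(4*Bc^2) = ln(4*Bc^2)/ln 2 * ln 2" using l2 by simp
    also have "\<dots> \<le> ln(4*Bc^2)/ln 2 * ln Nr" using lN lB l2 by (intro mult_left_mono) auto
    finally show ?thesis .
  qed
  show ?thesis
  proof (cases "z = 0")
    case True
    have lN0: "ln Nr \<ge> 0" using N by simp
    have "0 \<le> ln(4*Bc^2)/ln 2" using lB l2 by simp
    hence "0 \<le> (20 + ln(4*Bc^2)/ln 2)" by linarith
    hence "0 \<le> (20 + ln(4*Bc^2)/ln 2) * ln Nr" using lN0 by (rule mult_nonneg_nonneg)
    thus ?thesis using True by simp
  next
    case False
    hence zp: "z > 0" using z0 by simp
    have "ln z \<le> ln (4*Bc^2*Nr^20)" using zp z by simp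
    also have "\<dots> = ln (4*Bc^2) + 20 * ln Nr" using B N by (simp add: ln_mult ln_realpow)
    also have "\<dots> \<le> (20 + ln(4*Bc^2)/ln 2) * ln Nr" using q by (simp add: algebra_simps)
    finally show ?thesis .
  qed
qed

theorem lemma2p1:
  assumes "ABC_conjecture"
  shows "\<exists>c::real. c > 0 \<and>
    (\<forall>(N::int) (P::ecpt). N > 0 \<and> on_curve N P \<and> P \<noteq> Inf \<and> \<not> torsion N P \<and>
        ec_length (ec_add N P P) \<le> 1 \<longrightarrow>
          ln \<bar>real_of_rat (xcoord P)\<bar> \<le> c * ln (real_of_int N) \<and>
          ln \<bar>real_of_rat (xcoord (ec_add N P P))\<bar> \<le> c * ln (real_of_int N))"
proof -
  obtain K :: real where K1: "K \<ge> 1" and ABC: "\<And>a b c::int. a + b = c \<Longrightarrow> a \<noteq> 0 \<Longrightarrow> b \<noteq> 0 \<Longrightarrow> c \<noteq> 0 \<Longrightarrow>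
     real_of_int (max \<bar>a\<bar> (max \<bar>b\<bar> \<bar>c\<bar>)) \<le> real_of_int (gcd a b) * K * real_of_int (rad (a*b*c)) powr (3/2)"
    using abc_gen[OF assms] by blast
  define Bc where "Bc = 64 * K^4"
  have "1 \<le> K^4" by (rule one_le_power[OF K1])
  hence Bc1: "Bc \<ge> 1" unfolding Bc_def by linarith
  define c where "c = 20 + ln(4*Bc^2)/ln 2"
  have "1 \<le> Bc^2" by (rule one_le_power[OF Bc1])
  hence "1 \<le> 4*Bc^2" by linarith
  hence "ln (4*Bc^2) \<ge> 0" by simp
  hence "ln(4*Bc^2)/ln 2 \<ge> 0" by simp
  hence cpos: "c > 0" unfolding c_def by linarith
  have main: "ln \<bar>real_of_rat (xcoord P)\<bar> \<le> c * ln (real_of_int N) \<and>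
          ln \<bar>real_of_rat (xcoord (ec_add N P P))\<bar> \<le> c * ln (real_of_int N)"
    if hyp: "N > 0" "on_curve N P" "P \<noteq> Inf" "\<not> torsion N P" "ec_length (ec_add N P P) \<le> 1"
    for N P
  proof -
    obtain x y where P: "P = Pt x y" using hyp(3) by (cases P) auto
    have curve: "y^2 = x^3 - of_int N * x" using hyp(2) P by simp
    have ynz: "y \<noteq> 0"
    proof
      assume y0: "y = 0"
      have "ec_add N P P = Inf" using P y0 by simp
      hence "ec_mult N 2 P = Inf" using P by (simp add: ec_mult_def numeral_2_eq_2)
      hence "torsion N P" unfolding torsion_def by (intro exI[of _ 2]) simp
      thus False using hyp(4) by simp
    qed
    define X3 where "X3 = ((3 * x^2 - of_int N) / (2 * y))^2 - x - x"
    have dbl: "xcoord (ec_add N P P) = X3"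
    proof -
      have "\<not> (x = x \<and> y = - y)" using ynz by simp
      thus ?thesis using P unfolding X3_def by (simp add: Let_def)
    qed
    have X3e: "X3 * (4 * y^2) = (x^2 + of_int N)^2"
    proof -
      have "X3 * (4 * y^2) = (3 * x^2 - of_int N)^2 - 8 * x * y^2"
        unfolding X3_def using ynz by (simp add: field_simps power2_eq_square)
      also have "\<dots> = (x^2 + of_int N)^2" unfolding curve by (simp add: power2_eq_square power3_eq_cube algebra_simps)
      finally show ?thesis .
    qed
    obtain a d where qx: "quotient_of x = (a, d)" by (cases "quotient_of x")
    have d: "d > 0" using quotient_of_denom_pos[OF qx] .
    have cop: "coprime a d" using quotient_of_coprime[OF qx] .
    have xe: "x = of_int a / of_int d" using quotient_of_div[OF qx] .
    have xd: "x * of_int d = of_int a" using xe d by simp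
    define W where "W = a * (a^2 - N*d^2)"
    have yW: "y^2 * of_int d ^ 3 = of_int W"
    proof -
      have "y^2 * of_int d ^ 3 = (x * of_int d)^3 - of_int N * (x * of_int d) * of_int d ^ 2"
        unfolding curve by (simp add: algebra_simps power3_eq_cube power2_eq_square)
      also have "\<dots> = of_int W" unfolding xd W_def by (simp add: algebra_simps power3_eq_cube power2_eq_square)
      finally show ?thesis .
    qed
    have Wnz: "W \<noteq> 0"
    proof
      assume "W = 0"
      hence "y^2 * of_int d ^ 3 = 0" using yW by simp
      thus False using ynz d by simp
    qed
    have "(y * of_int d ^ 2)^2 = of_int (W * d)"
      using yW by (simp add: power2_eq_square power3_eq_cube algebra_simps)
    then obtain Cq where Cq: "y * of_int d ^ 2 = of_int Cq" using rat_sq_int by blast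
    have WC: "W * d = Cq^2"
    proof -
      have "rat_of_int (W * d) = rat_of_int (Cq^2)"
        using \<open>(y * of_int d ^ 2)^2 = of_int (W * d)\<close> Cq by simp
      thus ?thesis by (simp only: of_int_eq_iff)
    qed
    define U where "U = (a^2 + N*d^2)^2"
    define V where "V = 4 * d * W"
    have Vnz: "V \<noteq> 0" unfolding V_def using d Wnz by simp
    have X3UV: "X3 * of_int V = of_int U"
    proof -
      have Vy: "rat_of_int V = 4 * y^2 * of_int d ^ 4"
      proof -
        have "rat_of_int V = 4 * (y^2 * of_int d ^ 3) * of_int d" unfolding V_def yW by simp
        also have "\<dots> = 4 * y^2 * of_int d ^ 4" by (simp add: eval_nat_numeral algebra_simps)
        finally show ?thesis .
      qed
      have "X3 * of_int V = X3 * (4 * y^2) * of_int d ^ 4" unfolding Vy by (simp add: mult.assoc)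
      also have "\<dots> = ((x * of_int d)^2 + of_int N * of_int d ^ 2)^2"
        unfolding X3e by (simp add: algebra_simps power2_eq_square power3_eq_cube eval_nat_numeral)
      also have "\<dots> = of_int U" unfolding xd U_def by simp
      finally show ?thesis .
    qed
    obtain n D where qX: "quotient_of X3 = (n, D)" by (cases "quotient_of X3")
    have D: "D > 0" using quotient_of_denom_pos[OF qX] .
    have X3q: "X3 = of_int n / of_int D" using quotient_of_div[OF qX] .
    have nV: "n * V = U * D"
    proof -
      have "rat_of_int (n * V) = rat_of_int (U * D)"
        using X3UV X3q D by (simp add: field_simps)
      thus ?thesis by (simp only: of_int_eq_iff)
    qed
    define S where "S = prime_factors D"
    have fS: "finite S" unfolding S_def by simp
    have cS: "card S \<le> 1" using hyp(5) dbl qX unfolding ec_length_def S_def by simp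
    have FG: "q \<in> S" if "prime q" "q dvd V" "\<not> q dvd U" for q
    proof -
      have "q dvd U * D" using that(2) nV by (metis dvd_mult)
      hence "q dvd D" using that prime_dvd_multD by blast
      thus ?thesis unfolding S_def using that(1) D by (auto intro: prime_factorsI)
    qed
    have qU: "q dvd a^2 + N*d^2" if "prime q" "q dvd U" for q
      using that prime_dvd_power_iff[of q 2 "a^2 + N*d^2"] unfolding U_def by simp
    have F1: "q \<in> S" if q: "prime q" "q dvd d" for q
    proof (rule FG[OF q(1)])
      show "q dvd V" unfolding V_def using q(2) by simp
      show "\<not> q dvd U"
      proof
        assume "q dvd U"
        hence "q dvd a^2 + N*d^2" using qU q(1) by blast
        moreover have "q dvd N*d^2" using q(2) by (simp add: power2_eq_square)
        ultimately have "q dvd (a^2 + N*d^2) - N*d^2" by (rule dvd_diff)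
        hence "q dvd a" using q(1) prime_dvd_power_iff[of q 2 a] by simp
        thus False using coprime_primeD[OF cop q(1) _ q(2)] by blast
      qed
    qed
    have F2: "q \<in> S" if q: "prime q" "q dvd W" "\<not> q dvd 2*N" for q
    proof (rule FG[OF q(1)])
      show "q dvd V" unfolding V_def using q(2) by simp
      show "\<not> q dvd U"
      proof
        assume "q dvd U"
        hence T: "q dvd a^2 + N*d^2" using qU q(1) by blast
        have qa: False if "q dvd a"
        proof -
          have "q dvd a^2" using that by (simp add: power2_eq_square)
          hence "q dvd (a^2 + N*d^2) - a^2" using T dvd_diff by blast
          hence "q dvd N * d^2" by simp
          hence "q dvd N \<or> q dvd d^2" using prime_dvd_multD[OF q(1)] by blast
          moreover have "\<not> q dvd N" using q(3) by (metis dvd_mult)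
          ultimately have "q dvd d" using q(1) prime_dvd_power_iff[of q 2 d] by auto
          thus False using coprime_primeD[OF cop q(1) that] by blast
        qed
        have "q dvd a \<or> q dvd a^2 - N*d^2" using prime_dvd_multD[OF q(1)] q(2) unfolding W_def by blast
        thus False
        proof
          assume "q dvd a" thus False by (rule qa)
        next
          assume h: "q dvd a^2 - N*d^2"
          have "q dvd (a^2 + N*d^2) + (a^2 - N*d^2)" using T h by (rule dvd_add)
          hence "q dvd 2 * a^2" by (simp add: algebra_simps)
          hence "q dvd 2 \<or> q dvd a^2" using prime_dvd_multD[OF q(1)] by blast
          moreover have "\<not> q dvd 2" using q(3) by (metis dvd_mult2)
          ultimately have "q dvd a" using q(1) prime_dvd_power_iff[of q 2 a] by auto
          thus False by (rule qa)
        qed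
      qed
    qed
    have N2: "N \<ge> 2"
    proof (rule ccontr)
      assume "\<not> N \<ge> 2"
      hence N1: "N = 1" using hyp(1) by simp
      show False
      proof (rule int_N1[OF d cop _ Wnz WC fS cS F1])
        show "W = a * (a^2 - 1*d^2)" unfolding W_def N1 by simp
        show "q \<in> S" if "prime q" "q dvd W" "\<not> q dvd 2*1" for q using F2 that N1 by simp
      qed
    qed
    have Mb: "real_of_int (max \<bar>a^2 - N*d^2\<bar> (max \<bar>N*d^2\<bar> \<bar>a^2\<bar>)) \<le> 64 * K^4 * real_of_int N ^ 10"
      by (rule int_bound[OF hyp(1) d cop W_def Wnz WC fS cS F1 F2 K1 ABC])
    define Mi where "Mi = max \<bar>a^2 - N*d^2\<bar> (max \<bar>N*d^2\<bar> \<bar>a^2\<bar>)"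
    have MB: "real_of_int Mi \<le> Bc * real_of_int N ^ 10" using Mb unfolding Mi_def Bc_def .
    have Ma: "a^2 \<le> Mi" and Mn: "N*d^2 \<le> Mi" unfolding Mi_def by auto
    have Nr: "real_of_int N \<ge> 2" using N2 by simp
    have Nr1: "real_of_int N ^ 10 \<ge> 1" using Nr by (simp add: one_le_power)
    have Mpos: "0 \<le> Mi" unfolding Mi_def by simp
    have "\<bar>real_of_rat x\<bar> = \<bar>real_of_int a\<bar> / real_of_int d" using xe d by (simp add: of_rat_divide)
    also have "\<dots> \<le> \<bar>real_of_int a\<bar>" using d by (simp add: divide_le_eq mult_le_cancel_left1) 
    also have "\<dots> \<le> real_of_int (a^2)"
    proof -
      have "a \<noteq> 0" using Wnz unfolding W_def by auto
      hence "\<bar>a\<bar> * 1 \<le> \<bar>a\<bar> * \<bar>a\<bar>" by (intro mult_left_mono) auto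
      hence "\<bar>a\<bar> \<le> a^2" by (simp add: power2_eq_square abs_mult_self_eq)
      thus ?thesis by linarith
    qed
    also have "\<dots> \<le> real_of_int Mi" using Ma by linarith
    also have "\<dots> \<le> Bc * real_of_int N ^ 10" by (rule MB)
    also have "\<dots> \<le> 4 * Bc^2 * real_of_int N ^ 20"
    proof -
      have "Bc * 1 \<le> Bc * (4 * Bc)" using Bc1 by (intro mult_left_mono) auto
      hence h1: "Bc \<le> 4 * Bc^2" by (simp add: power2_eq_square)
      have "real_of_int N ^ 10 * 1 \<le> real_of_int N ^ 10 * real_of_int N ^ 10" using Nr1 by (intro mult_left_mono) auto
      hence h2: "real_of_int N ^ 10 \<le> real_of_int N ^ 20" by (simp add: power_add[symmetric])
      have "Bc * real_of_int N ^ 10 \<le> (4 * Bc^2) * real_of_int N ^ 20"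
        using h1 h2 Bc1 Nr1 by (intro mult_mono) auto
      thus ?thesis by simp
    qed
    finally have bx: "\<bar>real_of_rat x\<bar> \<le> 4 * Bc^2 * real_of_int N ^ 20" .
    have X3r: "real_of_rat X3 * real_of_int V = real_of_int U"
    proof -
      have "real_of_rat (X3 * of_int V) = real_of_rat (of_int U)" using X3UV by simp
      thus ?thesis by (simp add: of_rat_mult)
    qed
    have V1: "\<bar>real_of_int V\<bar> \<ge> 1" using Vnz by linarith
    have "\<bar>real_of_rat X3\<bar> * 1 \<le> \<bar>real_of_rat X3\<bar> * \<bar>real_of_int V\<bar>" using V1 by (intro mult_left_mono) auto
    also have "\<dots> = \<bar>real_of_int U\<bar>" using X3r by (metis abs_mult)
    also have "\<dots> = real_of_int U" unfolding U_def by simp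
    also have "\<dots> = (real_of_int (a^2) + real_of_int (N*d^2))^2" unfolding U_def by simp
    also have "\<dots> \<le> (2 * real_of_int Mi)^2"
    proof (rule power_mono)
      show "real_of_int (a^2) + real_of_int (N*d^2) \<le> 2 * real_of_int Mi" using Ma Mn by linarith
      show "0 \<le> real_of_int (a^2) + real_of_int (N*d^2)" using hyp(1) by simp
    qed
    also have "\<dots> = 4 * (real_of_int Mi)^2" by (simp add: power2_eq_square)
    also have "\<dots> \<le> 4 * (Bc * real_of_int N ^ 10)^2"
      using MB Mpos by (intro mult_left_mono power_mono) auto
    also have "\<dots> = 4 * Bc^2 * real_of_int N ^ 20" by (simp add: power_mult_distrib power_mult[symmetric])
    finally have bX: "\<bar>real_of_rat X3\<bar> \<le> 4 * Bc^2 * real_of_int N ^ 20" by simp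
    have r1: "ln \<bar>real_of_rat (xcoord P)\<bar> \<le> c * ln (real_of_int N)"
      unfolding c_def P using ln_final[OF Bc1 Nr _ bx] by simp
    have r2: "ln \<bar>real_of_rat (xcoord (ec_add N P P))\<bar> \<le> c * ln (real_of_int N)"
      unfolding c_def dbl using ln_final[OF Bc1 Nr _ bX] by simp
    show ?thesis using r1 r2 by simp
  qed
  show ?thesis using cpos main by blast
qed


end
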